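(* Assume $a^2\rho(\mathbf P_1\mathbf E)<1$. For every $\theta\in\mathbb N$, every reception index $j$, every $\gamma_{S_j}\in\{1,\dots,n\}$ and every value $x_{S_j}\in\mathbb R$, the performance-evaluation function satisfies $\mathcal J_{S_j}^\theta\le\mathcal R_j(\theta)$, where $$\mathcal R_j(\theta):=\big[\tilde g_\theta(\bar a^2,\gamma_{S_j})-\tilde g_\theta(c^2,\gamma_{S_j})\big]\frac{B}{c^{2\theta}}+\bar M\big[\tilde g_\theta(a^2,\gamma_{S_j})-\tilde g_\theta(1,\gamma_{S_j})\big],$$ with $\tilde g_\theta(b,\gamma):=b^\theta\,\mathbf d^T(\mathbf I-b\mathbf P_1\mathbf E)^{-1}\mathbf P_0^{\theta-1}\mathbf P_1\boldsymbol\delta_\gamma$.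
   Context: Setup. Fix reals $a,L$ with $|a|>1$ and $\bar a:=a+L$ satisfying $0<\bar a^2<1$; fix $c$ with $\bar a^2<c^2<1$, $M>0$, $B>0$, and $\bar M:=M/(a^2-1)$. Plant $x_{k+1}=ax_k+u_k+v_k$, $v_k$ i.i.d., mean $0$, variance $M$, independent of everything else. Sensor decisions $t_k\in\{0,1\}$, receptions $r_k\in\{0,1\}$ ($r_k=0$ if $t_k=0$). Controller $u_k=L\hat x_k^+$, $\hat x_k:=\bar a\hat x_{k-1}^+$, $\hat x_k^+:=x_k$ if $r_k=1$, else $\hat x_k$. Channel state $\gamma_k\in\{1,\dots,n\}$ with $\Pr[\gamma_{k+1}=i\mid\gamma_k=j,t_k=\ell]=(\mathbf P_\ell)_{ij}$, $\mathbf P_0,\mathbf P_1$ column-stochastic; drop probabilities $\mathbf e\in[0,1]^n$ (if $t_k=1$, $r_k=1$ w.p. $1-e_{\gamma_k}$); $\mathbf E:=\mathrm{diag}(\mathbf e)$, $\mathbf d:=\mathbf 1-\mathbf e$, $\mathbf P^0:=\mathbf I$, $\boldsymbol\delta_i$ standard basis vectors, $\rho$ spectral radius. $r_0=1$; $R_k:=\max\{i<k:r_i=1\}$; $S_0:=0$, $S_{j+1}:=\min\{k>S_j:r_k=1\}$. $I_k^+$ denotes the sensor's post-transmission information at time $k$, which at a reception time $S_j$ consists of $x_{S_j}$, $z^+_{S_j}=0$, $S_j$ and $\gamma_{S_j}$. Performance function $h_k:=x_k^2-\max\{c^{2(k-R_k)}x_{R_k}^2,B\}$. Nominal policy $\mathcal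 T_k^D$: $t_i=0$ for $k\le i\le k+D-1$, $t_i=1$ for $i\ge k+D$. Performance-evaluation function: $\mathcal J_{S_j}^\theta:=\mathbb E_{\mathcal T^{\theta-1}_{S_j+1}}[h_{S_{j+1}}\mid I_{S_j}^+]=\sum_{w\ge\theta}H(w,x_{S_j}^2)\,\mathbf d^T(\mathbf P_1\mathbf E)^{w-\theta}\mathbf P_0^{\theta-1}\mathbf P_1\boldsymbol\delta_{\gamma_{S_j}}$, where $H(w,y):=\bar a^{2w}y+\bar M(a^{2w}-1)-\max\{c^{2w}y,B\}$. *)

theory Defs
  imports Complex_Main "Jordan_Normal_Form.Spectral_Radius" "Jordan_Normal_Form.Gauss_Jordan_Elimination"
begin

text \<open>Channel states are indexed 0..<n (paper: 1..n). Matrices are JNF matrices.\<close>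

definition col_stochastic :: "nat \<Rightarrow> real mat \<Rightarrow> bool" where
  "col_stochastic n P \<longleftrightarrow> P \<in> carrier_mat n n \<and>
     (\<forall>i<n. \<forall>j<n. 0 \<le> P $$ (i,j)) \<and> (\<forall>j<n. (\<Sum>i<n. P $$ (i,j)) = 1)"

definition Emat :: "nat \<Rightarrow> real vec \<Rightarrow> real mat" where
  "Emat n e = mat n n (\<lambda>(i,j). if i = j then e $ i else 0)"

definition dvec :: "nat \<Rightarrow> real vec \<Rightarrow> real vec" where
  "dvec n e = vec n (\<lambda>i. 1 - e $ i)"

text \<open>H(w,y) = abar^(2w) y + Mbar (a^(2w) - 1) - max(c^(2w) y, B), with abar = a + L, Mbar = M/(a^2-1).\<close>
definition Hfun :: "real \<Rightarrow> real \<Rightarrow> real \<Rightarrow> real \<Rightarrow> real \<Rightarrow> nat \<Rightarrow> real \<Rightarrow> real" where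
  "Hfun a L c M B w y = (a + L) ^ (2*w) * y + (M / (a^2 - 1)) * (a ^ (2*w) - 1) - max (c ^ (2*w) * y) B"

text \<open>Performance-evaluation function J^theta_{S_j} as an explicit function of
  x = x_{S_j} and g = gamma_{S_j}:
  sum_{w >= theta} H(w, x^2) d^T (P1 E)^(w-theta) P0^(theta-1) P1 delta_g.\<close>
definition Jfun :: "real \<Rightarrow> real \<Rightarrow> real \<Rightarrow> real \<Rightarrow> real \<Rightarrow> nat \<Rightarrow> real mat \<Rightarrow> real mat \<Rightarrow> real vec
                    \<Rightarrow> nat \<Rightarrow> real \<Rightarrow> nat \<Rightarrow> real" where
  "Jfun a L c M B n P0 P1 e \<theta> x g =
     (\<Sum>k. Hfun a L c M B (\<theta> + k) (x^2) *
        scalar_prod (dvec n e) (((P1 * Emat n e) ^\<^sub>m k * (P0 ^\<^sub>m (\<theta> - 1)) * P1) *\<^sub>v unit_vec n g))"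

definition gtil :: "nat \<Rightarrow> real mat \<Rightarrow> real mat \<Rightarrow> real vec \<Rightarrow> nat \<Rightarrow> real \<Rightarrow> nat \<Rightarrow> real" where
  "gtil n P0 P1 e \<theta> b g =
     b ^ \<theta> * scalar_prod (dvec n e)
        ((the (mat_inverse (1\<^sub>m n - b \<cdot>\<^sub>m (P1 * Emat n e))) * (P0 ^\<^sub>m (\<theta> - 1)) * P1) *\<^sub>v unit_vec n g)"

definition Rfun :: "real \<Rightarrow> real \<Rightarrow> real \<Rightarrow> real \<Rightarrow> real \<Rightarrow> nat \<Rightarrow> real mat \<Rightarrow> real mat \<Rightarrow> real vec
                    \<Rightarrow> nat \<Rightarrow> nat \<Rightarrow> real" where
  "Rfun a L c M B n P0 P1 e \<theta> g =
     (gtil n P0 P1 e \<theta> ((a+L)^2) g - gtil n P0 P1 e \<theta> (c^2) g) * B / c ^ (2*\<theta>)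
     + (M / (a^2 - 1)) * (gtil n P0 P1 e \<theta> (a^2) g - gtil n P0 P1 e \<theta> 1 g)"

end

theory Submission
  imports Defs
begin


lemma smult_pow_mat:
  assumes A: "(A :: 'a :: comm_ring_1 mat) \<in> carrier_mat n n"
  shows "(t \<cdot>\<^sub>m A) ^\<^sub>m k = (t ^ k) \<cdot>\<^sub>m (A ^\<^sub>m k)"
proof (induct k)
  case 0 then show ?case using A by (auto intro!: eq_matI)
next
  case (Suc k)
  have "(t \<cdot>\<^sub>m A) ^\<^sub>m Suc k = (t ^ k \<cdot>\<^sub>m A ^\<^sub>m k) * (t \<cdot>\<^sub>m A)" using Suc by simp
  also have "\<dots> = (t ^ Suc k) \<cdot>\<^sub>m (A ^\<^sub>m k * A)"
    using A by (simp add: mult_smult_assoc_mat[of _ n n _ n] mult_smult_distrib[of _ n n _ n]) (auto intro!: eq_matI simp: mult.commute)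
  finally show ?case by simp
qed

lemma pow_bound:
  assumes A: "(A :: real mat) \<in> carrier_mat n n" and n: "n > 0"
    and sr: "spectral_radius (map_mat complex_of_real A) < s" and s: "s > 0"
  shows "\<exists>C. \<forall>k i j. i < n \<longrightarrow> j < n \<longrightarrow> \<bar>(A ^\<^sub>m k) $$ (i,j)\<bar> \<le> C * s ^ k"
proof -
  define Ac where "Ac = map_mat complex_of_real A"
  have Ac: "Ac \<in> carrier_mat n n" using A by (simp add: Ac_def)
  define Bc where "Bc = complex_of_real (1/s) \<cdot>\<^sub>m Ac"
  have Bc: "Bc \<in> carrier_mat n n" using Ac by (simp add: Bc_def)
  have "spectral_radius Bc < 1"
  proof -
    from spectral_radius_mem_max(1)[OF Bc n] obtain ev where ev: "ev \<in> spectrum Bc"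
      and eq: "spectral_radius Bc = norm ev" by auto
    from ev obtain v where v: "v \<in> carrier_vec n" "v \<noteq> 0\<^sub>v n" "Bc *\<^sub>v v = ev \<cdot>\<^sub>v v"
      unfolding spectrum_def eigenvalue_def eigenvector_def using Bc by auto
    have AcB: "Ac = complex_of_real s \<cdot>\<^sub>m Bc" using s unfolding Bc_def by (auto intro!: eq_matI)
    have comp: "(\<Sum>l=0..<n. Bc $$ (i,l) * v $ l) = ev * v $ i" if "i < n" for i
      using arg_cong[OF v(3), of "\<lambda>w. w $ i"] that v(1) Bc
      by (simp add: mult_mat_vec_def scalar_prod_def)
    have "Ac *\<^sub>v v = (complex_of_real s * ev) \<cdot>\<^sub>v v"
    proof (rule eq_vecI)
      fix i assume i: "i < dim_vec ((complex_of_real s * ev) \<cdot>\<^sub>v v)"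
      hence i: "i < n" using v by simp
      have "(Ac *\<^sub>v v) $ i = (\<Sum>l=0..<n. complex_of_real s * (Bc $$ (i,l) * v $ l))"
        using i Ac Bc v AcB by (simp add: mult_mat_vec_def scalar_prod_def mult.assoc)
      also have "\<dots> = complex_of_real s * (ev * v $ i)" by (simp add: sum_distrib_left[symmetric] comp[OF i])
      finally show "(Ac *\<^sub>v v) $ i = ((complex_of_real s * ev) \<cdot>\<^sub>v v) $ i" using i v by simp
    qed (use v Ac in simp)
    hence "eigenvalue Ac (complex_of_real s * ev)" unfolding eigenvalue_def eigenvector_def
      using v Ac by auto
    hence "norm (complex_of_real s * ev) \<le> spectral_radius Ac"
      using spectral_radius_mem_max(2)[OF Ac n] unfolding spectrum_def by auto
    hence "s * norm ev \<le> spectral_radius Ac" using s by (simp add: norm_mult)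
    hence "s * norm ev < s * 1" using sr unfolding Ac_def by simp
    thus ?thesis using eq s by (metis mult_less_cancel_left_pos)
  qed
  from spectral_radius_jnf_norm_bound_less_1_upper_triangular[OF Bc this]
  obtain c where c: "\<And>k. norm_bound (Bc ^\<^sub>m k) c" by auto
  show ?thesis
  proof (intro exI[of _ c] allI impI)
    fix k i j assume ij: "i < n" "j < n"
    have "Bc ^\<^sub>m k = complex_of_real ((1/s)^k) \<cdot>\<^sub>m Ac ^\<^sub>m k"
      unfolding Bc_def smult_pow_mat[OF Ac] by simp
    also have "Ac ^\<^sub>m k = map_mat complex_of_real (A ^\<^sub>m k)"
      unfolding Ac_def by (rule of_real_hom.mat_hom_pow[OF A, symmetric])
    finally have X: "(Bc ^\<^sub>m k) $$ (i,j) = complex_of_real ((1/s)^k * (A ^\<^sub>m k) $$ (i,j))"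
      using ij A by simp
    have "norm ((Bc ^\<^sub>m k) $$ (i,j)) = (1/s)^k * \<bar>(A ^\<^sub>m k) $$ (i,j)\<bar>"
      unfolding X norm_of_real using s by (simp add: abs_mult)
    moreover have "norm ((Bc ^\<^sub>m k) $$ (i,j)) \<le> c" using c[of k] ij Bc
      unfolding norm_bound_def by auto
    ultimately have "(1/s)^k * \<bar>(A ^\<^sub>m k) $$ (i,j)\<bar> \<le> c" by simp
    hence "s^k * ((1/s)^k * \<bar>(A ^\<^sub>m k) $$ (i,j)\<bar>) \<le> s^k * c" using s by (simp add: mult_left_mono)
    thus "\<bar>(A ^\<^sub>m k) $$ (i,j)\<bar> \<le> c * s ^ k" using s by (simp add: power_one_over field_simps)
  qed
qed



lemma smult_mat_vec:
  assumes "X \<in> carrier_mat nr nc" "v \<in> carrier_vec nc"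
  shows "(k \<cdot>\<^sub>m X) *\<^sub>v v = (k :: 'a :: comm_ring_1) \<cdot>\<^sub>v (X *\<^sub>v v)"
  using assms by (intro eq_vecI) (auto simp: scalar_prod_def sum_distrib_left ac_simps)

lemma pow_Suc_left:
  assumes A: "(A :: 'a :: semiring_1 mat) \<in> carrier_mat n n"
  shows "A ^\<^sub>m Suc k = A * A ^\<^sub>m k"
proof (induct k)
  case 0 then show ?case using A by simp
next
  case (Suc k)
  have "A ^\<^sub>m Suc (Suc k) = (A * A ^\<^sub>m k) * A" using Suc by simp
  also have "\<dots> = A * (A ^\<^sub>m k * A)" using A by (simp add: assoc_mult_mat[of _ n n _ n _ n])
  finally show ?case by simp
qed

lemma mv_expand:
  assumes "N \<in> carrier_mat n m" "X \<in> carrier_vec m" "i < n"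
  shows "(N *\<^sub>v X) $ i = (\<Sum>l<m. N $$ (i,l) * X $ l)"
  using assms by (simp add: scalar_prod_def atLeast0LessThan)

lemma sp_expand:
  assumes "d \<in> carrier_vec n" "Y \<in> carrier_vec n"
  shows "d \<bullet> Y = (\<Sum>i<n. d $ i * Y $ i)"
  using assms by (simp add: scalar_prod_def atLeast0LessThan)

lemma mv_tendsto:
  assumes F: "\<And>k. F k \<in> carrier_mat n m" and X: "X \<in> carrier_vec m" and i: "i < n"
    and lim: "\<And>i j. i < n \<Longrightarrow> j < m \<Longrightarrow> (\<lambda>k. F k $$ (i,j)) \<longlonglongrightarrow> (0::real)"
  shows "(\<lambda>k. (F k *\<^sub>v X) $ i) \<longlonglongrightarrow> 0"
proof -
  have "(\<lambda>k. \<Sum>l<m. F k $$ (i,l) * X $ l) \<longlonglongrightarrow> (\<Sum>l<m. 0 * X $ l)"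
    by (intro tendsto_sum tendsto_mult lim i) auto
  thus ?thesis using mv_expand[OF F X i] by simp
qed

lemma sp_tendsto:
  assumes Y: "\<And>k. Y k \<in> carrier_vec n" and d: "d \<in> carrier_vec n"
    and lim: "\<And>i. i < n \<Longrightarrow> (\<lambda>k. Y k $ i) \<longlonglongrightarrow> (0::real)"
  shows "(\<lambda>k. d \<bullet> Y k) \<longlonglongrightarrow> 0"
proof -
  have "(\<lambda>k. \<Sum>i<n. d $ i * Y k $ i) \<longlonglongrightarrow> (\<Sum>i<n. d $ i * 0)"
    by (intro tendsto_sum tendsto_mult lim) auto
  thus ?thesis using sp_expand[OF d Y] by simp
qed

lemma neumann:
  fixes A :: "real mat"
  assumes A: "A \<in> carrier_mat n n" and n: "n > 0"
    and d: "d \<in> carrier_vec n" and w: "w \<in> carrier_vec n"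
    and bnd: "\<And>k i j. i < n \<Longrightarrow> j < n \<Longrightarrow> \<bar>(A ^\<^sub>m k) $$ (i,j)\<bar> \<le> C * s ^ k"
    and s: "s > 0" and b: "b \<ge> 0" "b * s < 1"
  shows "(\<lambda>k. b ^ k * (d \<bullet> (A ^\<^sub>m k *\<^sub>v w))) sums (d \<bullet> (the (mat_inverse (1\<^sub>m n - b \<cdot>\<^sub>m A)) *\<^sub>v w))"
    and "the (mat_inverse (1\<^sub>m n - b \<cdot>\<^sub>m A)) \<in> carrier_mat n n"
proof -
  define F where "F k = b ^ k \<cdot>\<^sub>m A ^\<^sub>m k" for k
  have F: "F k \<in> carrier_mat n n" for k using A by (simp add: F_def)
  have Flim: "(\<lambda>k. F k $$ (i,j)) \<longlonglongrightarrow> 0" if "i < n" "j < n" for i j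
  proof (rule tendsto_0_le)
    show "(\<lambda>k. (b*s)^k) \<longlonglongrightarrow> 0" using b s by (intro LIMSEQ_power_zero) auto
    show "\<forall>\<^sub>F k in sequentially. norm (F k $$ (i,j)) \<le> norm ((b*s) ^ k) * \<bar>C\<bar>"
    proof (intro always_eventually allI)
      fix k
      have "norm (F k $$ (i,j)) = b^k * \<bar>(A ^\<^sub>m k) $$ (i,j)\<bar>"
        using that A b by (simp add: F_def abs_mult)
      also have "\<dots> \<le> b^k * (C * s^k)" using bnd[OF that] b by (simp add: mult_left_mono)
      also have "\<dots> = C * (b*s) ^ k" by (simp add: power_mult_distrib ac_simps)
      also have "\<dots> \<le> norm ((b*s) ^ k) * \<bar>C\<bar>" using b s by (simp add: abs_mult mult.commute mult_right_mono)
      finally show "norm (F k $$ (i,j)) \<le> norm ((b*s) ^ k) * \<bar>C\<bar>" .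
    qed
  qed
  define M where "M = 1\<^sub>m n - b \<cdot>\<^sub>m A"
  have M: "M \<in> carrier_mat n n" using A unfolding M_def by (intro minus_carrier_mat) auto
  have Mv: "M *\<^sub>v v = v - b \<cdot>\<^sub>v (A *\<^sub>v v)" if "v \<in> carrier_vec n" for v
    unfolding M_def using A that
    by (simp add: minus_mult_distrib_mat_vec[of _ n n] smult_mat_vec[of _ n n])
  have FSuc: "F (Suc k) *\<^sub>v v = b \<cdot>\<^sub>v (A *\<^sub>v (F k *\<^sub>v v))" if "v \<in> carrier_vec n" for v k
  proof -
    have "F (Suc k) = b \<cdot>\<^sub>m (A * F k)"
      unfolding F_def pow_Suc_left[OF A] using A
      by (simp add: mult_smult_distrib[of _ n n _ n]) (auto intro!: eq_matI)
    thus ?thesis using A that F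
      by (simp add: smult_mat_vec[of _ n n] assoc_mult_mat_vec[of _ n n _ n])
  qed
  have "det M \<noteq> 0"
  proof
    assume "det M = 0"
    then obtain v where v: "v \<in> carrier_vec n" "v \<noteq> 0\<^sub>v n" "M *\<^sub>v v = 0\<^sub>v n"
      using det_0_iff_vec_prod_zero[OF M] by auto
    have vfix: "v = b \<cdot>\<^sub>v (A *\<^sub>v v)"
    proof -
      have "v - b \<cdot>\<^sub>v (A *\<^sub>v v) = 0\<^sub>v n" using Mv[OF v(1)] v(3) by simp

      show ?thesis
      proof (rule eq_vecI)
        fix i assume "i < dim_vec (b \<cdot>\<^sub>v (A *\<^sub>v v))"
        hence i: "i < n" using A by simp
        have "(v - b \<cdot>\<^sub>v (A *\<^sub>v v)) $ i = 0" using arg_cong[OF \<open>v - b \<cdot>\<^sub>v (A *\<^sub>v v) = 0\<^sub>v n\<close>, of "\<lambda>x. x $ i"] i by simp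
        thus "v $ i = (b \<cdot>\<^sub>v (A *\<^sub>v v)) $ i" using i A v(1) by simp
      qed (use v A in simp)
    qed
    have vk: "F k *\<^sub>v v = v" for k
    proof (induct k)
      case 0 show ?case using v A by (simp add: F_def smult_mat_vec[of _ n n])
    next
      case (Suc k)
      have "F (Suc k) *\<^sub>v v = b \<cdot>\<^sub>v (A *\<^sub>v v)" using FSuc[OF v(1), of k] Suc by simp
      then show ?case using vfix by simp
    qed
    have "v = 0\<^sub>v n"
    proof (rule eq_vecI)
      fix i assume "i < dim_vec (0\<^sub>v n :: real vec)"
      hence i: "i < n" by simp
      have "(\<lambda>k. (F k *\<^sub>v v) $ i) \<longlonglongrightarrow> 0" by (rule mv_tendsto[OF F v(1) i Flim])
      hence "(\<lambda>k. v $ i) \<longlonglongrightarrow> 0" using vk by simp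
      thus "v $ i = 0\<^sub>v n $ i" using i by (simp add: LIMSEQ_const_iff)
    qed (use v in simp)
    with v(2) show False by simp
  qed
  hence "M \<in> Units (ring_mat TYPE(real) n (undefined::unit))" by (rule det_non_zero_imp_unit[OF M])
  then obtain Mi where Mi: "mat_inverse M = Some Mi"
    using mat_inverse(1)[OF M, where b="undefined::unit"] by (cases "mat_inverse M") auto
  from mat_inverse(2)[OF M Mi] have MiM: "Mi * M = 1\<^sub>m n" and Mic: "Mi \<in> carrier_mat n n" by auto
  define u where "u k = F k *\<^sub>v w" for k
  have u: "u k \<in> carrier_vec n" for k using F[of k] w unfolding u_def by (rule mult_mat_vec_carrier)
  define f where "f k = d \<bullet> (Mi *\<^sub>v u k)" for k
  have tele: "f k - f (Suc k) = b ^ k * (d \<bullet> (A ^\<^sub>m k *\<^sub>v w))" for k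
  proof -
    have "u (Suc k) = b \<cdot>\<^sub>v (A *\<^sub>v u k)" using FSuc[OF w] by (simp add: u_def)
    hence "u k - u (Suc k) = M *\<^sub>v u k" using Mv[OF u] by simp
    have "f k - f (Suc k) = d \<bullet> (Mi *\<^sub>v u k - Mi *\<^sub>v u (Suc k))"
      unfolding f_def using scalar_prod_minus_distrib[OF d, of "Mi *\<^sub>v u k" "Mi *\<^sub>v u (Suc k)"] Mic u by simp
    also have "\<dots> = d \<bullet> (Mi *\<^sub>v (u k - u (Suc k)))"
      using mult_minus_distrib_mat_vec[OF Mic u u] by simp
    also have "\<dots> = d \<bullet> (Mi *\<^sub>v (M *\<^sub>v u k))" using \<open>u k - u (Suc k) = M *\<^sub>v u k\<close> by simp
    also have "\<dots> = d \<bullet> u k" using assoc_mult_mat_vec[OF Mic M u, symmetric] u by (simp add: MiM)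
    also have "\<dots> = b ^ k * (d \<bullet> (A ^\<^sub>m k *\<^sub>v w))"
      unfolding u_def F_def using A w d by (simp add: smult_mat_vec[of _ n n])
    finally show ?thesis .
  qed
  have flim: "f \<longlonglongrightarrow> 0"
    unfolding f_def
  proof (rule sp_tendsto[OF _ d])
    show "Mi *\<^sub>v u k \<in> carrier_vec n" for k using Mic u by simp
    fix i assume i: "i < n"
    have "(\<lambda>k. (Mi *\<^sub>v u k) $ i) = (\<lambda>k. \<Sum>l<n. Mi $$ (i,l) * u k $ l)"
      using mv_expand[OF Mic u i] by simp
    moreover have "(\<lambda>k. \<Sum>l<n. Mi $$ (i,l) * u k $ l) \<longlonglongrightarrow> (\<Sum>l<n. Mi $$ (i,l) * 0)"
      by (intro tendsto_sum tendsto_mult tendsto_const mv_tendsto[OF F w _ Flim, folded u_def]) auto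
    ultimately show "(\<lambda>k. (Mi *\<^sub>v u k) $ i) \<longlonglongrightarrow> 0" by simp
  qed
  have "f 0 = d \<bullet> (Mi *\<^sub>v w)" using w A by (simp add: f_def u_def F_def smult_mat_vec[of _ n n])
  with telescope_sums'[OF flim] tele Mi
  show "(\<lambda>k. b ^ k * (d \<bullet> (A ^\<^sub>m k *\<^sub>v w))) sums (d \<bullet> (the (mat_inverse (1\<^sub>m n - b \<cdot>\<^sub>m A)) *\<^sub>v w))"
    by (simp add: M_def)
  show "the (mat_inverse (1\<^sub>m n - b \<cdot>\<^sub>m A)) \<in> carrier_mat n n" using Mi Mic by (simp add: M_def)
qed



lemma real_bound:
  fixes p q q0 B y :: real
  assumes "0 \<le> p" "p \<le> q" "0 < q" "q \<le> q0" "0 < B" "0 \<le> y"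
  shows "p*y - max (q*y) B \<le> (p-q)*B/q0"
proof -
  have "B/q0 \<le> B/q" using assms by (intro divide_left_mono) auto
  hence 1: "(p-q)*(B/q) \<le> (p-q)*(B/q0)" using assms by (intro mult_left_mono_neg) auto
  have 2: "p*y - max (q*y) B \<le> (p-q)*(B/q)"
  proof (cases "q*y \<ge> B")
    case True
    hence "B/q \<le> y" using assms by (simp add: divide_le_eq mult.commute)
    hence "(p-q)*y \<le> (p-q)*(B/q)" using assms by (intro mult_left_mono_neg) auto
    thus ?thesis using True by (simp add: algebra_simps)
  next
    case False
    hence "y \<le> B/q" using assms by (simp add: le_divide_eq mult.commute)
    hence "p*y \<le> p*(B/q)" using assms by (intro mult_left_mono) auto
    moreover have "p*(B/q) - B = (p-q)*(B/q)" using assms by (simp add: field_simps)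
    ultimately show ?thesis using False by simp
  qed
  from 1 2 show ?thesis by simp
qed

definition nn :: "nat \<Rightarrow> real mat \<Rightarrow> bool" where
  "nn n M \<longleftrightarrow> (\<forall>i<n. \<forall>j<n. 0 \<le> M $$ (i,j))"

lemma nn_mult:
  assumes "M \<in> carrier_mat n n" "N \<in> carrier_mat n n" "nn n M" "nn n N"
  shows "nn n (M * N)"
  using assms unfolding nn_def
  by (auto simp: scalar_prod_def intro!: sum_nonneg mult_nonneg_nonneg)

lemma nn_pow:
  assumes "M \<in> carrier_mat n n" "nn n M"
  shows "nn n (M ^\<^sub>m k)"
proof (induct k)
  case 0 then show ?case using assms by (auto simp: nn_def)
next
  case (Suc k) then show ?case using assms by (simp add: nn_mult)
qed

lemma nn_vec:
  assumes "M \<in> carrier_mat n n" "nn n M" "v \<in> carrier_vec n" "\<forall>i<n. 0 \<le> v $ i" "i < n"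
  shows "0 \<le> (M *\<^sub>v v) $ i"
  using assms unfolding nn_def
  by (auto simp: scalar_prod_def intro!: sum_nonneg mult_nonneg_nonneg)


theorem mainTheorem4:
  fixes a L c M B :: real and n :: nat and P0 P1 :: "real mat" and e :: "real vec"
  assumes "\<bar>a\<bar> > 1"
    and "0 < (a + L)^2" and "(a + L)^2 < 1"
    and "(a + L)^2 < c^2" and "c^2 < 1"
    and "M > 0" and "B > 0"
    and "n \<ge> 1"
    and "col_stochastic n P0" and "col_stochastic n P1"
    and "e \<in> carrier_vec n" and "\<forall>i<n. 0 \<le> e $ i \<and> e $ i \<le> 1"
    and "a^2 * spectral_radius (map_mat complex_of_real (P1 * Emat n e)) < 1"
  shows "\<forall>\<theta>::nat. \<theta> \<ge> 1 \<longrightarrow> (\<forall>g<n. \<forall>x::real.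
           Jfun a L c M B n P0 P1 e \<theta> x g \<le> Rfun a L c M B n P0 P1 e \<theta> g)"
proof (intro allI impI)
  fix \<theta> :: nat and g :: nat and x :: real
  assume th: "\<theta> \<ge> 1" and g: "g < n"
  note as = assms
  have n0: "n > 0" using as(8) by simp
  have P0: "P0 \<in> carrier_mat n n" and P1: "P1 \<in> carrier_mat n n"
    using as(9,10) by (auto simp: col_stochastic_def)
  have nP0: "nn n P0" and nP1: "nn n P1" using as(9,10) by (auto simp: col_stochastic_def nn_def)
  define E where "E = Emat n e"
  have E: "E \<in> carrier_mat n n" by (simp add: E_def Emat_def)
  have nE: "nn n E" using as(12) by (simp add: E_def Emat_def nn_def)
  define A where "A = P1 * E"
  have A: "A \<in> carrier_mat n n" using P1 E by (simp add: A_def)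
  have nA: "nn n A" using nn_mult[OF P1 E nP1 nE] by (simp add: A_def)
  define Q where "Q = P0 ^\<^sub>m (\<theta> - 1) * P1"
  have Q: "Q \<in> carrier_mat n n" unfolding Q_def by (rule mult_carrier_mat[OF pow_carrier_mat[OF P0] P1])
  have nQ: "nn n Q" unfolding Q_def by (rule nn_mult[OF _ P1 nn_pow[OF P0 nP0] nP1]) (use P0 in simp)
  define w where "w = Q *\<^sub>v unit_vec n g"
  have w: "w \<in> carrier_vec n" using Q by (simp add: w_def)
  have nw: "\<forall>i<n. 0 \<le> w $ i" unfolding w_def using nn_vec[OF Q nQ, of "unit_vec n g"] g by auto
  define d where "d = dvec n e"
  have d: "d \<in> carrier_vec n" by (simp add: d_def dvec_def)
  have nd: "\<forall>i<n. 0 \<le> d $ i" using as(12) by (simp add: d_def dvec_def)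
  define vk where "vk k = d \<bullet> (A ^\<^sub>m k *\<^sub>v w)" for k
  have vk_nn: "0 \<le> vk k" for k
  proof -
    have "A ^\<^sub>m k *\<^sub>v w \<in> carrier_vec n" using pow_carrier_mat[OF A] w by (rule mult_mat_vec_carrier)
    moreover have "\<forall>i<n. 0 \<le> (A ^\<^sub>m k *\<^sub>v w) $ i"
      using nn_vec[OF pow_carrier_mat[OF A] nn_pow[OF A nA] w nw] by simp
    ultimately show ?thesis unfolding vk_def sp_expand[OF d \<open>A ^\<^sub>m k *\<^sub>v w \<in> carrier_vec n\<close>] using nd
      by (intro sum_nonneg mult_nonneg_nonneg) auto
  qed
  have term_eq: "scalar_prod (dvec n e) (((P1 * Emat n e) ^\<^sub>m k * (P0 ^\<^sub>m (\<theta> - 1)) * P1) *\<^sub>v unit_vec n g) = vk k" for k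
  proof -
    have "(A ^\<^sub>m k * (P0 ^\<^sub>m (\<theta> - 1)) * P1) = A ^\<^sub>m k * Q"
      unfolding Q_def using A P0 P1 by (simp add: assoc_mult_mat[of _ n n _ n _ n])
    thus ?thesis unfolding vk_def w_def d_def using A Q
      by (simp add: A_def E_def assoc_mult_mat_vec[of _ n n _ n])
  qed
  define r where "r = spectral_radius (map_mat complex_of_real A)"
  have a2: "a^2 > 1" using as(1) by (metis abs_le_square_iff abs_one less_le one_power2 power2_abs not_less)
  have ar: "a^2 * r < 1" using as(13) by (simp add: r_def A_def E_def)
  define s where "s = (max r 0 + 1/a^2)/2"
  have "r < 1/a^2" using ar a2 by (subst pos_less_divide_eq) (auto simp: mult.commute)
  hence rlt: "max r 0 < 1/a^2" using a2 as(1) by (auto simp: max_less_iff_conj)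
  have ia: "0 < 1/a^2" using as(1) by simp
  have s0: "s > 0" unfolding s_def using ia by (simp add: add_nonneg_pos)
  have rs: "r < s" proof -
    have "r < (max r 0 + t)/2" if "max r 0 < t" for t using that by (auto simp: field_simps max_def)
    from this[OF rlt] show ?thesis by (simp add: s_def)
  qed
  have as1: "a^2 * s < 1"
  proof -
    have "(m + t)/2 < t" if "m < t" for m t :: real using that by (simp add: field_simps)
    from this[OF rlt] have "s < 1/a^2" by (simp add: s_def)
    thus ?thesis using a2 as(1) by (subst (asm) less_divide_eq) (auto simp: mult.commute split: if_splits)
  qed
  obtain C where C: "\<And>k i j. i < n \<Longrightarrow> j < n \<Longrightarrow> \<bar>(A ^\<^sub>m k) $$ (i,j)\<bar> \<le> C * s ^ k"
    using pow_bound[OF A n0 rs[unfolded r_def] s0] by blast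
  have gsum: "(\<lambda>k. b ^ (\<theta> + k) * vk k) sums gtil n P0 P1 e \<theta> b g" if b: "0 \<le> b" "b \<le> a^2" for b
  proof -
    have bs: "b * s < 1" using b s0 as1 by (meson le_less_trans mult_right_mono less_imp_le)
    note N = neumann[OF A n0 d w C s0 b(1) bs]
    have "(\<lambda>k. b^\<theta> * (b ^ k * vk k)) sums (b^\<theta> * (d \<bullet> (the (mat_inverse (1\<^sub>m n - b \<cdot>\<^sub>m A)) *\<^sub>v w)))"
      by (rule sums_mult) (use N(1) in \<open>simp add: vk_def\<close>)
    moreover have "gtil n P0 P1 e \<theta> b g = b^\<theta> * (d \<bullet> (the (mat_inverse (1\<^sub>m n - b \<cdot>\<^sub>m A)) *\<^sub>v w))"
    proof -
      have "the (mat_inverse (1\<^sub>m n - b \<cdot>\<^sub>m A)) * P0 ^\<^sub>m (\<theta> - 1) * P1 = the (mat_inverse (1\<^sub>m n - b \<cdot>\<^sub>m A)) * Q"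
        unfolding Q_def using N(2) P0 P1 by (simp add: assoc_mult_mat[of _ n n _ n _ n])
      thus ?thesis unfolding gtil_def w_def d_def using N(2) Q
        by (simp add: A_def E_def assoc_mult_mat_vec[of _ n n _ n])
    qed
    ultimately show ?thesis by (simp add: power_add ac_simps)
  qed
  define abar2 where "abar2 = (a+L)^2"
  define c2 where "c2 = c^2"
  define Mb where "Mb = M / (a^2 - 1)"
  have Mb: "Mb > 0" using a2 as(6) by (simp add: Mb_def)
  define y where "y = x^2"
  have y: "y \<ge> 0" by (simp add: y_def)
  define J where "J k = Hfun a L c M B (\<theta> + k) y * vk k" for k
  define G where "G k = ((abar2^(\<theta>+k) - c2^(\<theta>+k)) * B / c2^\<theta> + Mb * ((a^2)^(\<theta>+k) - 1)) * vk k" for k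
  define Lo where "Lo k = - (y + B) * vk k" for k
  have c2: "0 < c2" "c2 < 1" using as(2,4,5) by (auto simp: c2_def)
  have Hup: "Hfun a L c M B (\<theta> + k) y \<le> (abar2^(\<theta>+k) - c2^(\<theta>+k)) * B / c2^\<theta> + Mb * ((a^2)^(\<theta>+k) - 1)" for k
  proof -
    have "abar2^(\<theta>+k) * y - max (c2^(\<theta>+k) * y) B \<le> (abar2^(\<theta>+k) - c2^(\<theta>+k)) * B / c2^\<theta>"
    proof (rule real_bound)
      show "0 \<le> abar2^(\<theta>+k)" by (simp add: abar2_def)
      show "abar2^(\<theta>+k) \<le> c2^(\<theta>+k)" using as(4) by (intro power_mono) (auto simp: abar2_def c2_def)
      show "0 < c2^(\<theta>+k)" using c2 by simp
      show "c2^(\<theta>+k) \<le> c2^\<theta>" using c2 by (intro power_decreasing) auto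
    qed (use as(7) y in auto)
    thus ?thesis unfolding Hfun_def abar2_def c2_def Mb_def power_mult by argo
  qed
  have Hlo: "- (y + B) \<le> Hfun a L c M B (\<theta> + k) y" for k
  proof -
    have 1: "0 \<le> (a+L)^(2*(\<theta>+k)) * y" unfolding power_mult
      by (rule mult_nonneg_nonneg[OF zero_le_power[OF zero_le_power2] y])
    have ge: "1 \<le> (a^2)^(\<theta>+k)" using a2 one_le_power[of "a^2" "\<theta>+k"] by simp
    have 2: "0 \<le> M / (a^2 - 1) * (a^(2*(\<theta>+k)) - 1)" unfolding power_mult
      using Mb ge unfolding Mb_def by (intro mult_nonneg_nonneg) auto
    have le1: "c2^(\<theta>+k) \<le> 1" using c2 power_le_one[of c2 "\<theta>+k"] by simp
    have "c^(2*(\<theta>+k)) * y \<le> 1 * y" unfolding power_mult c2_def[symmetric]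
      using le1 y by (intro mult_right_mono) auto
    hence 3: "max (c^(2*(\<theta>+k)) * y) B \<le> y + B" using y as(7) by simp
    show ?thesis using 1 2 3 unfolding Hfun_def by argo
  qed
  have JG: "J k \<le> G k" for k unfolding J_def G_def using Hup[of k] vk_nn[of k] by (rule mult_right_mono)
  have LJ: "Lo k \<le> J k" for k unfolding J_def Lo_def using Hlo[of k] vk_nn[of k] by (rule mult_right_mono)
  have s1: "(\<lambda>k. vk k) sums gtil n P0 P1 e \<theta> 1 g" using gsum[of 1] a2 by simp
  have sab: "(\<lambda>k. abar2 ^ (\<theta> + k) * vk k) sums gtil n P0 P1 e \<theta> abar2 g"
    using gsum[of abar2] as(3) a2 by (simp add: abar2_def)
  have sc: "(\<lambda>k. c2 ^ (\<theta> + k) * vk k) sums gtil n P0 P1 e \<theta> c2 g"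
    using gsum[of c2] c2 a2 by simp
  have sa: "(\<lambda>k. (a^2) ^ (\<theta> + k) * vk k) sums gtil n P0 P1 e \<theta> (a^2) g"
    using gsum[of "a^2"] by simp
  have Gs: "G sums Rfun a L c M B n P0 P1 e \<theta> g"
  proof -
    have "(\<lambda>k. (abar2 ^ (\<theta> + k) * vk k - c2 ^ (\<theta> + k) * vk k) * (B / c2^\<theta>)
             + Mb * ((a^2) ^ (\<theta> + k) * vk k - vk k))
          sums ((gtil n P0 P1 e \<theta> abar2 g - gtil n P0 P1 e \<theta> c2 g) * (B / c2^\<theta>)
             + Mb * (gtil n P0 P1 e \<theta> (a^2) g - gtil n P0 P1 e \<theta> 1 g))"
      by (intro sums_add sums_mult2 sums_mult sums_diff sab sc sa s1)
    moreover have "(\<lambda>k. (abar2 ^ (\<theta> + k) * vk k - c2 ^ (\<theta> + k) * vk k) * (B / c2^\<theta>)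
             + Mb * ((a^2) ^ (\<theta> + k) * vk k - vk k)) = G"
      by (rule ext) (simp add: G_def algebra_simps diff_divide_distrib)
    moreover have "(gtil n P0 P1 e \<theta> abar2 g - gtil n P0 P1 e \<theta> c2 g) * (B / c2^\<theta>)
             + Mb * (gtil n P0 P1 e \<theta> (a^2) g - gtil n P0 P1 e \<theta> 1 g) = Rfun a L c M B n P0 P1 e \<theta> g"
      by (simp add: Rfun_def abar2_def c2_def Mb_def power_mult)
    ultimately show ?thesis by simp
  qed
  have Ls: "summable Lo" unfolding Lo_def using s1 by (intro summable_mult sums_summable)
  have GL: "summable (\<lambda>k. G k - Lo k)" using Gs Ls by (intro summable_diff) (auto simp: sums_summable)
  have JL: "summable (\<lambda>k. J k - Lo k)"
  proof (rule summable_comparison_test'[OF GL])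
    fix k :: nat assume "k \<ge> 0"
    show "norm (J k - Lo k) \<le> G k - Lo k" using JG[of k] LJ[of k] by simp
  qed
  have Js: "summable J" using summable_add[OF JL Ls] by simp
  have "suminf J \<le> suminf G" using JG Js Gs by (intro suminf_le) (auto simp: sums_summable)
  moreover have "Jfun a L c M B n P0 P1 e \<theta> x g = suminf J"
    unfolding Jfun_def J_def y_def using term_eq by simp
  ultimately show "Jfun a L c M B n P0 P1 e \<theta> x g \<le> Rfun a L c M B n P0 P1 e \<theta> g"
    using sums_unique[OF Gs] by simp
qed

end
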